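(* For any simple graph $G$ on $n$ vertices, \[|E(G)|-|E(G^{(2)})|\le\left\lfloor\frac n2\right\rfloor.\] Furthermore, equality holds if and only if every connected component of $G$ is a complete bipartite graph $K_{a,b}$ with $|a-b|\le 1$ (an isolated vertex being regarded as $K_{0,1}$) and at most one component of $G$ has an odd number of vertices.
   Context: For a simple graph $G$, $G^{(2)}$ is the graph on $V(G)$ in which $\{u,v\}$ ($u\ne v$) is an edge iff there is $w\in V(G)$ with $\{u,w\},\{v,w\}\in E(G)$. *)

theory Defs
  imports Main
begin

definition simple_graph :: "'a set \<Rightarrow> 'a set set \<Rightarrow> bool" where
  "simple_graph V E \<longleftrightarrow> finite V \<and> (\<forall>e\<in>E. e \<subseteq> V \<and> card e = 2)"

definition square_edges :: "'a set \<Rightarrow> 'a set set \<Rightarrow> 'a set set" where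
  "square_edges V E = {{u, v} | u v. u \<in> V \<and> v \<in> V \<and> u \<noteq> v \<and>
                         (\<exists>w\<in>V. {u, w} \<in> E \<and> {v, w} \<in> E)}"

definition adj :: "'a set set \<Rightarrow> 'a \<Rightarrow> 'a \<Rightarrow> bool" where
  "adj E u v \<longleftrightarrow> {u, v} \<in> E"

definition component :: "'a set \<Rightarrow> 'a set set \<Rightarrow> 'a \<Rightarrow> 'a set" where
  "component V E v = {u \<in> V. (adj E)\<^sup>*\<^sup>* v u}"

definition components :: "'a set \<Rightarrow> 'a set set \<Rightarrow> 'a set set" where
  "components V E = component V E ` V"

definition balanced_complete_bipartite :: "'a set set \<Rightarrow> 'a set \<Rightarrow> bool" where
  "balanced_complete_bipartite E C \<longleftrightarrow>
     (\<exists>A B. A \<inter> B = {} \<and> A \<union> B = C \<and>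
        {e \<in> E. e \<subseteq> C} = {{x, y} | x y. x \<in> A \<and> y \<in> B} \<and>
        \<bar>int (card A) - int (card B)\<bar> \<le> 1)"

end

theory Submission
  imports Defs
begin

definition nbr :: "'a set set \<Rightarrow> 'a \<Rightarrow> 'a set" where
  "nbr E u = {w. {u,w} \<in> E}"

definition nb2 :: "'a set \<Rightarrow> 'a set set \<Rightarrow> 'a \<Rightarrow> 'a set" where
  "nb2 V E u = {x \<in> V. x \<noteq> u \<and> (\<exists>w\<in>V. {u,w} \<in> E \<and> {x,w} \<in> E)}"

lemma sg_edgeD:
  assumes "simple_graph V E" "{u,v} \<in> E"
  shows "u \<noteq> v" "u \<in> V" "v \<in> V"
proof -
  have "card {u,v} = 2" "{u,v} \<subseteq> V" using assms unfolding simple_graph_def by auto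
  then show "u \<noteq> v" "u \<in> V" "v \<in> V" by (auto split: if_splits)
qed

lemma nbr_sub: "simple_graph V E \<Longrightarrow> nbr E u \<subseteq> V"
  unfolding nbr_def by (auto dest: sg_edgeD(3))

lemma sg_finite: "simple_graph V E \<Longrightarrow> finite V"
  unfolding simple_graph_def by auto

lemma sg_finiteE: "simple_graph V E \<Longrightarrow> finite E"
proof -
  assume "simple_graph V E"
  then have "E \<subseteq> Pow V" "finite V" unfolding simple_graph_def by auto
  then show "finite E" by (simp add: finite_subset)
qed

lemma card2_eq:
  assumes "card e = 2" "u \<in> e" "v \<in> e" "u \<noteq> v"
  shows "e = {u,v}"
proof -
  obtain x y where "e = {x,y}" "x \<noteq> y" using assms(1) card_2_iff by metis
  then show ?thesis using assms by auto
qed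

lemma card_star:
  assumes "\<forall>e\<in>F. card e = 2"
  shows "card {x. {u,x} \<in> F} = card {e\<in>F. u \<in> e}"
proof -
  have "bij_betw (\<lambda>x. {u,x}) {x. {u,x} \<in> F} {e\<in>F. u \<in> e}"
  proof (rule bij_betw_imageI)
    show "inj_on (\<lambda>x. {u,x}) {x. {u,x} \<in> F}"
      by (auto simp: inj_on_def doubleton_eq_iff)
    show "(\<lambda>x. {u,x}) ` {x. {u,x} \<in> F} = {e\<in>F. u \<in> e}"
    proof
      show "(\<lambda>x. {u,x}) ` {x. {u,x} \<in> F} \<subseteq> {e\<in>F. u \<in> e}" by auto
      show "{e\<in>F. u \<in> e} \<subseteq> (\<lambda>x. {u,x}) ` {x. {u,x} \<in> F}"
      proof
        fix e assume "e \<in> {e\<in>F. u \<in> e}"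
        then have "e \<in> F" "u \<in> e" by auto
        then obtain x y where "e = {x,y}" using assms card_2_iff by metis
        then have "e = {u, if u = x then y else x}" using \<open>u \<in> e\<close> by auto
        then show "e \<in> (\<lambda>x. {u,x}) ` {x. {u,x} \<in> F}" using \<open>e \<in> F\<close> by auto
      qed
    qed
  qed
  then show ?thesis by (rule bij_betw_same_card)
qed

lemma handshake:
  assumes "finite V" "\<forall>e\<in>F. e \<subseteq> V \<and> card e = 2"
  shows "2 * card F = (\<Sum>u\<in>V. card {x. {u,x} \<in> F})"
proof -
  have "F \<subseteq> Pow V" using assms by auto
  then have fF: "finite F" using assms(1) by (simp add: finite_subset)
  have "(\<Sum>u\<in>V. card {x. {u,x} \<in> F}) = (\<Sum>u\<in>V. card {e\<in>F. u \<in> e})"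
    using assms by (intro sum.cong refl card_star) auto
  also have "\<dots> = (\<Sum>u\<in>V. \<Sum>e\<in>F. if u \<in> e then 1 else 0)"
    using fF by (intro sum.cong refl) (simp add: sum.inter_filter[of F "\<lambda>_. 1", symmetric])
  also have "\<dots> = (\<Sum>e\<in>F. \<Sum>u\<in>V. if u \<in> e then 1 else 0)"
    by (rule sum.swap)
  also have "\<dots> = (\<Sum>e\<in>F. card e)"
  proof (rule sum.cong)
    fix e assume "e \<in> F"
    then have "e \<subseteq> V" using assms by auto
    have "(\<Sum>u\<in>V. if u \<in> e then 1 else 0) = card {u\<in>V. u \<in> e}"
      using assms(1) by (simp add: sum.inter_filter[of V "\<lambda>_. 1", symmetric])
    also have "{u\<in>V. u \<in> e} = e" using \<open>e \<subseteq> V\<close> by auto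
    finally show "(\<Sum>u\<in>V. if u \<in> e then 1 else 0) = card e" .
  qed simp
  also have "\<dots> = (\<Sum>e\<in>F. 2)" using assms by simp
  finally show ?thesis by simp
qed

lemma sq_iff:
  "{x,y} \<in> square_edges V E \<longleftrightarrow> x \<in> V \<and> y \<in> V \<and> x \<noteq> y \<and> (\<exists>w\<in>V. {x,w} \<in> E \<and> {y,w} \<in> E)"
  unfolding square_edges_def by (auto simp: doubleton_eq_iff)

lemma sq_sub: "square_edges V E \<subseteq> Pow V"
  unfolding square_edges_def by auto

lemma sq_card2: "e \<in> square_edges V E \<Longrightarrow> card e = 2"
  unfolding square_edges_def by auto

lemma sq_nbr: "simple_graph V E \<Longrightarrow> u \<in> V \<Longrightarrow> {x. {u,x} \<in> square_edges V E} = nb2 V E u"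
  unfolding nb2_def using sq_iff by (auto simp: sq_iff)

lemma sub_sg:
  assumes "simple_graph V E"
  shows "simple_graph (V - {u,v}) {e\<in>E. e \<subseteq> V - {u,v}}"
  using assms unfolding simple_graph_def by auto

lemma step:
  assumes sg: "simple_graph V E" and e: "{u,v} \<in> E"
    and IH: "int (card {e\<in>E. e \<subseteq> V - {u,v}}) - int (card (square_edges (V - {u,v}) {e\<in>E. e \<subseteq> V - {u,v}}))
             \<le> int (card (V - {u,v}) div 2)"
  shows "int (card E) - int (card (square_edges V E)) + int (card (nb2 V E u)) - (int (card (nbr E v)) - 1)
         \<le> int (card V div 2)"
proof -
  define V' where "V' = V - {u,v}"
  define E' where "E' = {e\<in>E. e \<subseteq> V'}"
  have uv: "u \<noteq> v" "u \<in> V" "v \<in> V" using sg_edgeD[OF sg e] by auto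
  have fV: "finite V" using sg by (rule sg_finite)
  have fE: "finite E" using sg by (rule sg_finiteE)
  have E2: "\<forall>e\<in>E. e \<subseteq> V \<and> card e = 2" using sg unfolding simple_graph_def by auto
  have c2: "\<forall>e\<in>E. card e = 2" using E2 by auto
  define Eu where "Eu = {e\<in>E. u \<in> e}"
  define Ev where "Ev = {e\<in>E. v \<in> e}"
  have du: "card Eu = card (nbr E u)" unfolding Eu_def nbr_def using card_star[OF c2] by metis
  have dv: "card Ev = card (nbr E v)" unfolding Ev_def nbr_def using card_star[OF c2] by metis
  have Edec: "E = E' \<union> (Eu \<union> Ev)" using E2 unfolding E'_def Eu_def Ev_def V'_def by auto
  have Edis: "E' \<inter> (Eu \<union> Ev) = {}" unfolding E'_def Eu_def Ev_def V'_def by auto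
  have EuEv: "Eu \<inter> Ev = {{u,v}}"
  proof
    show "Eu \<inter> Ev \<subseteq> {{u, v}}"
    proof
      fix s assume "s \<in> Eu \<inter> Ev"
      then have "s \<in> E" "u \<in> s" "v \<in> s" unfolding Eu_def Ev_def by auto
      then have "s = {u,v}" using card2_eq c2 uv(1) by metis
      then show "s \<in> {{u,v}}" by simp
    qed
    show "{{u, v}} \<subseteq> Eu \<inter> Ev" using e unfolding Eu_def Ev_def by auto
  qed
  have fEu: "finite Eu" "finite Ev" "finite E'" using fE unfolding Eu_def Ev_def E'_def by auto
  have "card Eu + card Ev = card (Eu \<union> Ev) + card (Eu \<inter> Ev)"
    using card_Un_Int fEu by blast
  then have cUV: "card (Eu \<union> Ev) + 1 = card (nbr E u) + card (nbr E v)" using du dv EuEv by simp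
  have cE: "card E = card E' + card (Eu \<union> Ev)"
    using Edec Edis fEu card_Un_disjoint by (metis finite_UnI)
  define S' where "S' = square_edges V' E'"
  define S1 where "S1 = (\<lambda>x. {u,x}) ` nb2 V E u"
  define S2 where "S2 = (\<lambda>y. {v,y}) ` (nbr E u - {v})"
  have fS: "finite (square_edges V E)" using sq_sub fV by (metis finite_Pow_iff finite_subset)
  have S'sub: "S' \<subseteq> square_edges V E"
  proof
    fix s assume "s \<in> S'"
    then obtain x y w where "s = {x,y}" "x \<in> V'" "y \<in> V'" "x \<noteq> y" "w \<in> V'" "{x,w} \<in> E'" "{y,w} \<in> E'"
      unfolding S'_def square_edges_def by blast
    then show "s \<in> square_edges V E" unfolding V'_def E'_def by (auto simp: sq_iff)
  qed
  have S1sub: "S1 \<subseteq> square_edges V E"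
    unfolding S1_def nb2_def using uv by (auto simp: sq_iff)
  have S2sub: "S2 \<subseteq> square_edges V E"
  proof
    fix s assume "s \<in> S2"
    then obtain y where y: "s = {v,y}" "{u,y} \<in> E" "y \<noteq> v" unfolding S2_def nbr_def by auto
    have "y \<in> V" using sg_edgeD[OF sg y(2)] by auto
    moreover have "{v,u} \<in> E" "{y,u} \<in> E" using e y(2) by (auto simp: insert_commute)
    ultimately show "s \<in> square_edges V E" unfolding y(1) sq_iff using uv y(3) by auto
  qed
  have dis1: "S' \<inter> (S1 \<union> S2) = {}"
    unfolding S'_def S1_def S2_def V'_def using sq_sub by blast
  have dis2: "S1 \<inter> S2 = {}"
  proof -
    { fix x y assume "x \<in> nb2 V E u" "y \<in> nbr E u - {v}" "{u,x} = {v,y}"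
      then have "y = u" using uv(1) by (auto simp: doubleton_eq_iff)
      then have "{u,u} \<in> E" using \<open>y \<in> nbr E u - {v}\<close> unfolding nbr_def by auto
      then have False using sg_edgeD[OF sg] by blast }
    then show ?thesis unfolding S1_def S2_def by blast
  qed
  have cS1: "card S1 = card (nb2 V E u)"
    unfolding S1_def by (rule card_image) (auto simp: inj_on_def doubleton_eq_iff nb2_def)
  have cS2: "card S2 = card (nbr E u - {v})"
    unfolding S2_def by (rule card_image) (auto simp: inj_on_def doubleton_eq_iff)
  have vin: "v \<in> nbr E u" using e unfolding nbr_def by auto
  have fnu: "finite (nbr E u)" using nbr_sub[OF sg] fV finite_subset by blast
  have "card (nbr E u) > 0" using vin fnu card_gt_0_iff by blast
  then have cS2': "card S2 + 1 = card (nbr E u)" using cS2 vin fnu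
    by (simp add: card_Diff_singleton)
  have fS': "finite S'" "finite S1" "finite S2" using fS S'sub S1sub S2sub finite_subset by blast+
  have "card S' + card S1 + card S2 = card (S' \<union> (S1 \<union> S2))"
    using dis1 dis2 fS' by (simp add: card_Un_disjoint)
  also have "\<dots> \<le> card (square_edges V E)"
    using S'sub S1sub S2sub fS by (intro card_mono) auto
  finally have cS: "card S' + card S1 + card S2 \<le> card (square_edges V E)" .
  have cV: "card V' = card V - 2" unfolding V'_def using uv fV
    by (simp add: card_Diff_subset)
  have cV2: "card V \<ge> 2" using uv fV
    by (metis card_2_iff card_mono empty_subsetI insert_subset)
  have IH': "int (card E') - int (card S') \<le> int (card V' div 2)"
    using IH unfolding E'_def S'_def V'_def by simp
  have "card V' div 2 + 1 = card V div 2" using cV cV2 by simp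
  then show ?thesis using IH' cS cS1 cS2' cE cUV by linarith
qed

lemma nbr_nb2:
  assumes sg: "simple_graph V E" and e: "{u,v} \<in> E"
  shows "nbr E v - {u} \<subseteq> nb2 V E u"
proof
  fix x assume x: "x \<in> nbr E v - {u}"
  then have "{v,x} \<in> E" "x \<noteq> u" unfolding nbr_def by auto
  then have "x \<in> V" "{x,v} \<in> E" using sg_edgeD[OF sg] by (auto simp: insert_commute)
  then show "x \<in> nb2 V E u" unfolding nb2_def using e \<open>x \<noteq> u\<close> sg_edgeD[OF sg e] by blast
qed

lemma ineq:
  "simple_graph V E \<Longrightarrow> int (card E) - int (card (square_edges V E)) \<le> int (card V div 2)"
proof (induction "card V" arbitrary: V E rule: less_induct)
  case less
  note sg = less.prems
  show ?case
  proof (cases "E = {}")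
    case True then show ?thesis by simp
  next
    case False
    then obtain e where "e \<in> E" by blast
    then have "card e = 2" using sg unfolding simple_graph_def by auto
    then obtain u v where e: "{u,v} \<in> E" using \<open>e \<in> E\<close> card_2_iff by metis
    have uv: "u \<noteq> v" "u \<in> V" "v \<in> V" using sg_edgeD[OF sg e] by auto
    have fV: "finite V" using sg by (rule sg_finite)
    have "card (V - {u,v}) = card V - 2" using uv fV by (simp add: card_Diff_subset)
    moreover have "card V > 0" using uv fV card_gt_0_iff by blast
    ultimately have "card (V - {u,v}) < card V" by linarith
    then have IH: "int (card {e\<in>E. e \<subseteq> V - {u,v}}) - int (card (square_edges (V - {u,v}) {e\<in>E. e \<subseteq> V - {u,v}}))
             \<le> int (card (V - {u,v}) div 2)" using less.hyps sub_sg[OF sg] by blast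
    have st: "int (card E) - int (card (square_edges V E)) + int (card (nb2 V E u)) - (int (card (nbr E v)) - 1)
         \<le> int (card V div 2)" by (rule step[OF sg e IH])
    have fn: "finite (nb2 V E u)" using fV unfolding nb2_def by auto
    have "card (nbr E v - {u}) \<le> card (nb2 V E u)" using card_mono[OF fn nbr_nb2[OF sg e]] .
    moreover have "u \<in> nbr E v" using e unfolding nbr_def by (auto simp: insert_commute)
    moreover have "finite (nbr E v)" using nbr_sub[OF sg] fV finite_subset by blast
    ultimately have "card (nbr E v) \<le> card (nb2 V E u) + 1"
      by (simp add: card_Diff_singleton)
    then show ?thesis using st by linarith
  qed
qed

lemma adj_sym: "adj E u v \<Longrightarrow> adj E v u"
  unfolding adj_def by (simp add: insert_commute)

lemma rtr_sym: "(adj E)\<^sup>*\<^sup>* a b \<Longrightarrow> (adj E)\<^sup>*\<^sup>* b a"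
proof (induction rule: rtranclp.induct)
  case (rtrancl_refl a) then show ?case by simp
next
  case (rtrancl_into_rtrancl a b c)
  then show ?case by (meson adj_sym converse_rtranclp_into_rtranclp)
qed

lemma comp_sub: "component V E r \<subseteq> V"
  unfolding component_def by auto

lemma comp_self: "r \<in> V \<Longrightarrow> r \<in> component V E r"
  unfolding component_def by auto

lemma comp_eq: "u \<in> component V E r \<Longrightarrow> component V E u = component V E r"
  unfolding component_def
  by (auto intro: rtranclp_trans rtr_sym)

lemma comps_disj: "C1 \<in> components V E \<Longrightarrow> C2 \<in> components V E \<Longrightarrow> x \<in> C1 \<Longrightarrow> x \<in> C2 \<Longrightarrow> C1 = C2"
  unfolding components_def using comp_eq by (metis imageE)

lemma comps_Union: "\<Union>(components V E) = V"
proof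
  show "\<Union>(components V E) \<subseteq> V" unfolding components_def using comp_sub[of V E] by auto
  show "V \<subseteq> \<Union>(components V E)"
  proof
    fix x assume "x \<in> V"
    then have "x \<in> component V E x" "component V E x \<in> components V E"
      using comp_self unfolding components_def by auto
    then show "x \<in> \<Union>(components V E)" by blast
  qed
qed

lemma comp_of: "C \<in> components V E \<Longrightarrow> u \<in> C \<Longrightarrow> C = component V E u"
  unfolding components_def using comp_eq by (metis imageE)

lemma comp_adj: "w \<in> V \<Longrightarrow> x \<in> component V E u \<Longrightarrow> {x,w} \<in> E \<Longrightarrow> w \<in> component V E u"
  unfolding component_def adj_def by (auto intro: rtranclp.rtrancl_into_rtrancl)

lemma same_nb:
  assumes sg: "simple_graph V E"
    and H: "\<forall>u v. {u,v} \<in> E \<longrightarrow> nb2 V E u \<subseteq> nbr E v"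
    and aw: "{a,w} \<in> E" and bw: "{b,w} \<in> E"
  shows "nbr E a \<subseteq> nbr E b"
proof
  fix z assume "z \<in> nbr E a"
  then have az: "{a,z} \<in> E" unfolding nbr_def by auto
  show "z \<in> nbr E b"
  proof (cases "z = w")
    case True then show ?thesis using bw unfolding nbr_def by auto
  next
    case False
    have "z \<in> V" "a \<in> V" using sg_edgeD[OF sg az] by auto
    moreover have "{w,a} \<in> E" "{z,a} \<in> E" using aw az by (auto simp: insert_commute)
    ultimately have "z \<in> nb2 V E w" unfolding nb2_def using False by blast
    moreover have "{w,b} \<in> E" using bw by (simp add: insert_commute)
    ultimately show ?thesis using H by blast
  qed
qed

lemma comp_cb:
  assumes sg: "simple_graph V E"
    and H: "\<forall>u v. {u,v} \<in> E \<longrightarrow> nb2 V E u \<subseteq> nbr E v"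
    and r: "r \<in> V"
  shows "\<exists>A B. A \<inter> B = {} \<and> A \<union> B = component V E r \<and>
        {e \<in> E. e \<subseteq> component V E r} = {{x, y} | x y. x \<in> A \<and> y \<in> B}"
proof (cases "nbr E r = {}")
  case True
  have "(adj E)\<^sup>*\<^sup>* r u \<Longrightarrow> u = r" for u
  proof (induction rule: rtranclp_induct)
    case base then show ?case by simp
  next
    case (step b c)
    then have "{r,c} \<in> E" unfolding adj_def by simp
    then show ?case using True unfolding nbr_def by auto
  qed
  then have C: "component V E r = {r}" using r unfolding component_def by auto
  have "{e \<in> E. e \<subseteq> {r}} = {}"
  proof -
    { fix e assume "e \<in> E" "e \<subseteq> {r}"
      then have "card e \<le> 1" using card_mono[of "{r}" e] by simp
      then have False using \<open>e \<in> E\<close> sg unfolding simple_graph_def by auto }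
    then show ?thesis by auto
  qed
  then show ?thesis using C by (intro exI[of _ "{}"] exI[of _ "{r}"]) auto
next
  case False
  then obtain v where rv: "{r,v} \<in> E" unfolding nbr_def by auto
  have vr: "{v,r} \<in> E" using rv by (simp add: insert_commute)
  define A where "A = nbr E v"
  define B where "B = nbr E r"
  have rA: "r \<in> A" unfolding A_def nbr_def using vr by simp
  have vB: "v \<in> B" unfolding B_def nbr_def using rv by simp
  have nA: "nbr E x = B" if "x \<in> A" for x
  proof -
    have "{x,v} \<in> E" using that unfolding A_def nbr_def by (simp add: insert_commute)
    then show ?thesis unfolding B_def using same_nb[OF sg H] rv by (meson subset_antisym)
  qed
  have nB: "nbr E y = A" if "y \<in> B" for y
  proof -
    have "{y,r} \<in> E" using that unfolding B_def nbr_def by (simp add: insert_commute)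
    then show ?thesis unfolding A_def using same_nb[OF sg H] vr by (meson subset_antisym)
  qed
  have disj: "A \<inter> B = {}"
  proof (rule ccontr)
    assume "A \<inter> B \<noteq> {}"
    then obtain x where "x \<in> A" "x \<in> B" by blast
    then have "x \<in> nbr E x" using nA by auto
    then have "{x,x} \<in> E" unfolding nbr_def by simp
    then show False using sg_edgeD[OF sg] by blast
  qed
  have sub1: "(adj E)\<^sup>*\<^sup>* r u \<Longrightarrow> u \<in> A \<union> B" for u
  proof (induction rule: rtranclp_induct)
    case base then show ?case using rA by simp
  next
    case (step b c)
    then have "c \<in> nbr E b" unfolding adj_def nbr_def by simp
    then show ?case using step.IH nA nB by blast
  qed
  have ABV: "A \<union> B \<subseteq> V" unfolding A_def B_def using nbr_sub[OF sg] by blast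
  have reachB: "(adj E)\<^sup>*\<^sup>* r y" if "y \<in> B" for y
    using that unfolding B_def nbr_def adj_def by auto
  have reachA: "(adj E)\<^sup>*\<^sup>* r x" if "x \<in> A" for x
  proof -
    have "adj E v x" using that unfolding A_def nbr_def adj_def by auto
    moreover have "(adj E)\<^sup>*\<^sup>* r v" using reachB vB by blast
    ultimately show ?thesis by (simp add: rtranclp.rtrancl_into_rtrancl)
  qed
  have C: "component V E r = A \<union> B"
    unfolding component_def using sub1 ABV reachA reachB by blast
  have edges: "{e \<in> E. e \<subseteq> A \<union> B} = {{x, y} | x y. x \<in> A \<and> y \<in> B}"
  proof
    show "{e \<in> E. e \<subseteq> A \<union> B} \<subseteq> {{x, y} | x y. x \<in> A \<and> y \<in> B}"
    proof
      fix e assume e: "e \<in> {e \<in> E. e \<subseteq> A \<union> B}"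
      then have "card e = 2" using sg unfolding simple_graph_def by auto
      then obtain x y where exy: "e = {x,y}" using card_2_iff by metis
      have xy: "{x,y} \<in> E" "x \<in> A \<union> B" using e exy by auto
      then have "y \<in> nbr E x" unfolding nbr_def by simp
      show "e \<in> {{x, y} | x y. x \<in> A \<and> y \<in> B}"
      proof (cases "x \<in> A")
        case True
        then have "y \<in> B" using nA \<open>y \<in> nbr E x\<close> by auto
        then show ?thesis using True exy by blast
      next
        case False
        then have "x \<in> B" using xy by auto
        then have "y \<in> A" using nB \<open>y \<in> nbr E x\<close> by auto
        then have "e = {y,x}" using exy by (simp add: insert_commute)
        then show ?thesis using \<open>y \<in> A\<close> \<open>x \<in> B\<close> by blast
      qed
    qed
    show "{{x, y} | x y. x \<in> A \<and> y \<in> B} \<subseteq> {e \<in> E. e \<subseteq> A \<union> B}"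
    proof
      fix e assume "e \<in> {{x, y} | x y. x \<in> A \<and> y \<in> B}"
      then obtain x y where "e = {x,y}" "x \<in> A" "y \<in> B" by blast
      then show "e \<in> {e \<in> E. e \<subseteq> A \<union> B}" using nA unfolding nbr_def by auto
    qed
  qed
  show ?thesis using disj C edges by (intro exI[of _ A] exI[of _ B]) auto
qed

lemma vertex_local:
  assumes sg: "simple_graph V E" and C: "C \<in> components V E" and u: "u \<in> P"
    and disj: "P \<inter> Q = {}" and PQ: "P \<union> Q = C"
    and edges: "{e\<in>E. e \<subseteq> C} = {{x,y} | x y. x \<in> P \<and> y \<in> Q}"
  shows "nbr E u = Q" "nb2 V E u = P - {u}"
proof -
  have uC: "u \<in> C" using u PQ by auto
  have Cu: "C = component V E u" using comp_of[OF C uC] .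
  have CV: "C \<subseteq> V" using Cu comp_sub by metis
  have inE: "{x,y} \<in> E" if "x \<in> P" "y \<in> Q" for x y
  proof -
    have "{x,y} \<in> {{x,y} | x y. x \<in> P \<and> y \<in> Q}" using that by blast
    then show ?thesis unfolding edges[symmetric] by simp
  qed
  have N: "nbr E u = Q"
  proof
    show "nbr E u \<subseteq> Q"
    proof
      fix w assume "w \<in> nbr E u"
      then have uw: "{u,w} \<in> E" unfolding nbr_def by simp
      then have "w \<in> V" using sg_edgeD[OF sg] by blast
      then have "w \<in> C" using comp_adj[of w V u E u] uw Cu uC by blast
      then have "{u,w} \<in> {e\<in>E. e \<subseteq> C}" using uw uC by auto
      from this[unfolded edges] obtain x y where "{u,w} = {x,y}" "x \<in> P" "y \<in> Q" by blast
      then show "w \<in> Q" using disj u by (auto simp: doubleton_eq_iff)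
    qed
    show "Q \<subseteq> nbr E u" unfolding nbr_def using inE u by blast
  qed
  show "nbr E u = Q" by (rule N)
  show "nb2 V E u = P - {u}"
  proof
    show "nb2 V E u \<subseteq> P - {u}"
    proof
      fix x assume "x \<in> nb2 V E u"
      then obtain w where x: "x \<in> V" "x \<noteq> u" "w \<in> V" "{u,w} \<in> E" "{x,w} \<in> E"
        unfolding nb2_def by blast
      have "w \<in> Q" using N x(4) unfolding nbr_def by blast
      then have wC: "w \<in> C" using PQ by auto
      have "{w,x} \<in> E" using x(5) by (simp add: insert_commute)
      then have "x \<in> C" using comp_adj[of x V w E u] x(1) wC Cu by blast
      then have "{x,w} \<in> {e\<in>E. e \<subseteq> C}" using x(5) wC by auto
      from this[unfolded edges] obtain p q where "{x,w} = {p,q}" "p \<in> P" "q \<in> Q" by blast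
      then show "x \<in> P - {u}" using disj \<open>w \<in> Q\<close> x(2) by (auto simp: doubleton_eq_iff)
    qed
    show "P - {u} \<subseteq> nb2 V E u"
    proof
      fix x assume xP: "x \<in> P - {u}"
      then have "x \<in> C" using PQ by auto
      then have "(adj E)\<^sup>*\<^sup>* u x" "x \<in> V" using Cu unfolding component_def by auto
      then obtain w where "adj E u w" using xP by (metis DiffE converse_rtranclpE singletonI)
      then have uw: "{u,w} \<in> E" unfolding adj_def .
      then have "w \<in> Q" using N unfolding nbr_def by blast
      then have "{x,w} \<in> E" using inE xP by blast
      moreover have "w \<in> V" using sg_edgeD[OF sg uw] by blast
      ultimately show "x \<in> nb2 V E u" unfolding nb2_def using xP uw \<open>x \<in> V\<close> by blast
    qed
  qed
qed

lemma sym_edges: "{{x,y} | x y. x \<in> A \<and> y \<in> B} = {{x,y} | x y. x \<in> B \<and> y \<in> A}"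
  by (auto simp: insert_commute)

lemma count:
  assumes sg: "simple_graph V E"
    and cb: "\<forall>C\<in>components V E. Af C \<inter> Bf C = {} \<and> Af C \<union> Bf C = C \<and>
              {e\<in>E. e \<subseteq> C} = {{x,y} | x y. x \<in> Af C \<and> y \<in> Bf C}"
  shows "2 * (int (card E) - int (card (square_edges V E))) =
         int (card V) - (\<Sum>C\<in>components V E. (int (card (Af C)) - int (card (Bf C)))^2)"
proof -
  have fV: "finite V" using sg by (rule sg_finite)
  have finC: "\<forall>A\<in>components V E. finite A"
  proof
    fix A assume "A \<in> components V E"
    then obtain r where "A = component V E r" unfolding components_def by blast
    then show "finite A" using comp_sub[of V E r] fV finite_subset by blast
  qed
  have pw: "\<forall>A\<in>components V E. \<forall>B\<in>components V E. A \<noteq> B \<longrightarrow> A \<inter> B = {}"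
    using comps_disj[of _ V E] by blast
  define f where "f u = int (card (nbr E u)) - int (card (nb2 V E u))" for u
  have h1: "2 * card E = (\<Sum>u\<in>V. card (nbr E u))"
    using handshake[OF fV, of E] sg unfolding simple_graph_def nbr_def by auto
  have h2': "2 * card (square_edges V E) = (\<Sum>u\<in>V. card {x. {u,x} \<in> square_edges V E})"
    using handshake[OF fV, of "square_edges V E"] sq_sub sq_card2 by blast
  have h2: "2 * card (square_edges V E) = (\<Sum>u\<in>V. card (nb2 V E u))"
    unfolding h2' using sq_nbr[OF sg] by (intro sum.cong) auto
  have "2 * (int (card E) - int (card (square_edges V E))) = (\<Sum>u\<in>V. f u)"
  proof -
    have "int (2 * card E) = (\<Sum>u\<in>V. int (card (nbr E u)))" unfolding h1 by simp
    moreover have "int (2 * card (square_edges V E)) = (\<Sum>u\<in>V. int (card (nb2 V E u)))" unfolding h2 by simp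
    ultimately show ?thesis unfolding f_def by (simp add: sum_subtractf)
  qed
  also have "\<dots> = (\<Sum>C\<in>components V E. \<Sum>u\<in>C. f u)"
  proof -
    have "(\<Sum>u\<in>\<Union>(components V E). f u) = (\<Sum>C\<in>components V E. \<Sum>u\<in>C. f u)"
      using sum.Union_disjoint[OF finC pw, of f] by simp
    then show ?thesis using comps_Union by metis
  qed
  also have "\<dots> = (\<Sum>C\<in>components V E. int (card C) - (int (card (Af C)) - int (card (Bf C)))^2)"
  proof (rule sum.cong[OF refl])
    fix C assume C: "C \<in> components V E"
    define A where "A = Af C"
    define B where "B = Bf C"
    have AB: "A \<inter> B = {}" "A \<union> B = C" "{e\<in>E. e \<subseteq> C} = {{x,y} | x y. x \<in> A \<and> y \<in> B}"
      using cb C unfolding A_def B_def by auto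
    have BA: "B \<inter> A = {}" "B \<union> A = C" "{e\<in>E. e \<subseteq> C} = {{x,y} | x y. x \<in> B \<and> y \<in> A}"
      using AB sym_edges[of A B] by (auto simp: Int_commute Un_commute)
    have fC: "finite C" using C finC by blast
    then have fAB: "finite A" "finite B" using AB by auto
    have fa: "f u = int (card B) - (int (card A) - 1)" if "u \<in> A" for u
    proof -
      have "nbr E u = B" "nb2 V E u = A - {u}" using vertex_local[OF sg C that AB] by auto
      moreover have "card A > 0" using that fAB card_gt_0_iff by blast
      ultimately show ?thesis unfolding f_def using that fAB by (simp add: card_Diff_singleton)
    qed
    have fb: "f u = int (card A) - (int (card B) - 1)" if "u \<in> B" for u
    proof -
      have "nbr E u = A" "nb2 V E u = B - {u}" using vertex_local[OF sg C that BA] by auto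
      moreover have "card B > 0" using that fAB card_gt_0_iff by blast
      ultimately show ?thesis unfolding f_def using that fAB by (simp add: card_Diff_singleton)
    qed
    have "(\<Sum>u\<in>C. f u) = (\<Sum>u\<in>A. f u) + (\<Sum>u\<in>B. f u)"
      using AB fAB sum.union_disjoint by metis
    also have "\<dots> = (\<Sum>u\<in>A. int (card B) - (int (card A) - 1)) + (\<Sum>u\<in>B. int (card A) - (int (card B) - 1))"
      using fa fb by simp
    also have "\<dots> = int (card A) * (int (card B) - (int (card A) - 1)) + int (card B) * (int (card A) - (int (card B) - 1))"
      by simp
    also have "\<dots> = (int (card A) + int (card B)) - (int (card A) - int (card B))^2"
      by (simp add: power2_eq_square algebra_simps)
    also have "int (card A) + int (card B) = int (card C)"
      using AB fAB card_Un_disjoint by (metis of_nat_add)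
    finally show "(\<Sum>u\<in>C. f u) = int (card C) - (int (card (Af C)) - int (card (Bf C)))^2"
      unfolding A_def B_def .
  qed
  also have "\<dots> = (\<Sum>C\<in>components V E. int (card C)) - (\<Sum>C\<in>components V E. (int (card (Af C)) - int (card (Bf C)))^2)"
    by (simp add: sum_subtractf)
  also have "(\<Sum>C\<in>components V E. int (card C)) = int (card V)"
  proof -
    have "(\<Sum>u\<in>\<Union>(components V E). (1::int)) = (\<Sum>C\<in>components V E. \<Sum>u\<in>C. 1)"
      using sum.Union_disjoint[OF finC pw, of "\<lambda>_. (1::int)"] by simp
    then have "int (card (\<Union>(components V E))) = (\<Sum>C\<in>components V E. int (card C))" by simp
    then show ?thesis using comps_Union[of V E] by simp
  qed
  finally show ?thesis .
qed

lemma eq_local: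
  assumes sg: "simple_graph V E"
    and eq: "int (card E) - int (card (square_edges V E)) = int (card V div 2)"
    and e: "{u,v} \<in> E"
  shows "nb2 V E u \<subseteq> nbr E v"
proof -
  have st: "int (card E) - int (card (square_edges V E)) + int (card (nb2 V E u)) - (int (card (nbr E v)) - 1)
         \<le> int (card V div 2)" by (rule step[OF sg e ineq[OF sub_sg[OF sg]]])
  have fV: "finite V" using sg by (rule sg_finite)
  have fn: "finite (nb2 V E u)" using fV unfolding nb2_def by auto
  have sub: "nbr E v - {u} \<subseteq> nb2 V E u" by (rule nbr_nb2[OF sg e])
  have "u \<in> nbr E v" using e unfolding nbr_def by (auto simp: insert_commute)
  moreover have "finite (nbr E v)" using nbr_sub[OF sg] fV finite_subset by blast
  ultimately have c: "int (card (nbr E v - {u})) = int (card (nbr E v)) - 1"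
  proof -
    assume a: "u \<in> nbr E v" "finite (nbr E v)"
    then have "card (nbr E v) > 0" using card_gt_0_iff by blast
    then show ?thesis using a by (simp add: card_Diff_singleton of_nat_diff)
  qed
  have "card (nbr E v - {u}) \<le> card (nb2 V E u)" using card_mono[OF fn sub] .
  then have "card (nbr E v - {u}) = card (nb2 V E u)" using st eq c by linarith
  then have "nbr E v - {u} = nb2 V E u" using card_subset_eq[OF fn sub] by simp
  then show ?thesis by blast
qed

lemma sq1: "(x::int) \<noteq> 0 \<Longrightarrow> 1 \<le> x^2"
proof -
  assume "x \<noteq> 0"
  then have "1 \<le> \<bar>x\<bar>" by arith
  then have "1 * 1 \<le> \<bar>x\<bar> * \<bar>x\<bar>" by (intro mult_mono) auto
  then show ?thesis by (simp add: power2_eq_square)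
qed

lemma sq_le1: "(x::int)^2 \<le> 1 \<Longrightarrow> \<bar>x\<bar> \<le> 1"
proof (rule ccontr)
  assume "x^2 \<le> 1" "\<not> \<bar>x\<bar> \<le> 1"
  then have "2 \<le> \<bar>x\<bar>" by arith
  then have "2 * 2 \<le> \<bar>x\<bar> * \<bar>x\<bar>" by (intro mult_mono) auto
  then show False using \<open>x^2 \<le> 1\<close> by (simp add: power2_eq_square)
qed

lemma D_bal: "\<bar>int a - int b\<bar> \<le> 1 \<Longrightarrow> (int a - int b)^2 = (if odd (a + b) then 1 else 0)"
proof -
  assume h: "\<bar>int a - int b\<bar> \<le> 1"
  then have "int a - int b = -1 \<or> int a - int b = 0 \<or> int a - int b = 1" by arith
  then show ?thesis
  proof (elim disjE)
    assume "int a - int b = -1" then have "b = a + 1" by arith then show ?thesis by simp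
  next
    assume "int a - int b = 0" then have "b = a" by arith then show ?thesis by simp
  next
    assume "int a - int b = 1" then have "a = b + 1" by arith then show ?thesis by simp
  qed
qed

theorem mainTheorem14:
  fixes V :: "'a set" and E :: "'a set set"
  assumes "simple_graph V E"
  shows "int (card E) - int (card (square_edges V E)) \<le> int (card V div 2) \<and>
         (int (card E) - int (card (square_edges V E)) = int (card V div 2) \<longleftrightarrow>
           (\<forall>C\<in>components V E. balanced_complete_bipartite E C) \<and>
           card {C \<in> components V E. odd (card C)} \<le> 1)"
proof -
  note sg = assms
  have fV: "finite V" using sg by (rule sg_finite)
  have fC: "finite (components V E)" unfolding components_def using fV by simp
  have finC: "\<forall>A\<in>components V E. finite A"
  proof
    fix A assume "A \<in> components V E"
    then obtain r where "A = component V E r" unfolding components_def by blast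
    then show "finite A" using comp_sub[of V E r] fV finite_subset by blast
  qed
  define P where "P C A B \<longleftrightarrow> A \<inter> B = {} \<and> A \<union> B = C \<and>
              {e\<in>E. e \<subseteq> C} = {{x,y} | x y. x \<in> A \<and> y \<in> B}" for C A B
  have "(int (card E) - int (card (square_edges V E)) = int (card V div 2)) \<longleftrightarrow>
           (\<forall>C\<in>components V E. balanced_complete_bipartite E C) \<and>
           card {C \<in> components V E. odd (card C)} \<le> 1"
  proof
    assume eq: "int (card E) - int (card (square_edges V E)) = int (card V div 2)"
    have H: "\<forall>u v. {u,v} \<in> E \<longrightarrow> nb2 V E u \<subseteq> nbr E v"
      using eq_local[OF sg eq] by blast
    have "\<forall>C\<in>components V E. \<exists>p. P C (fst p) (snd p)"
    proof
      fix C assume "C \<in> components V E"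
      then obtain r where r: "r \<in> V" "C = component V E r" unfolding components_def by blast
      then show "\<exists>p. P C (fst p) (snd p)" using comp_cb[OF sg H r(1)] unfolding P_def by auto
    qed
    then obtain g where g: "\<forall>C\<in>components V E. P C (fst (g C)) (snd (g C))"
      using bchoice by metis
    define Af where "Af C = fst (g C)" for C
    define Bf where "Bf C = snd (g C)" for C
    define D where "D C = (int (card (Af C)) - int (card (Bf C)))^2" for C
    have cb: "\<forall>C\<in>components V E. Af C \<inter> Bf C = {} \<and> Af C \<union> Bf C = C \<and>
              {e\<in>E. e \<subseteq> C} = {{x,y} | x y. x \<in> Af C \<and> y \<in> Bf C}"
      using g unfolding P_def Af_def Bf_def by blast
    have cnt: "2 * (int (card E) - int (card (square_edges V E))) =
         int (card V) - (\<Sum>C\<in>components V E. D C)"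
      using count[OF sg cb] unfolding D_def by simp
    have nv: "card V \<le> 2 * (card V div 2) + 1" by presburger
    then have nv': "int (card V) \<le> 2 * int (card V div 2) + 1" by linarith
    have "2 * int (card V div 2) = int (card V) - (\<Sum>C\<in>components V E. D C)"
      using cnt unfolding eq .
    then have SD: "(\<Sum>C\<in>components V E. D C) \<le> 1" using nv' by linarith
    have D0: "\<forall>C\<in>components V E. 0 \<le> D C" unfolding D_def by simp
    have Dle: "D C \<le> 1" if "C \<in> components V E" for C
    proof -
      have "D C \<le> (\<Sum>C\<in>components V E. D C)"
        using member_le_sum[of C "components V E" D] that D0 fC by blast
      then show ?thesis using SD by linarith
    qed
    have bal: "\<forall>C\<in>components V E. balanced_complete_bipartite E C"
    proof
      fix C assume C: "C \<in> components V E"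
      have ab: "\<bar>int (card (Af C)) - int (card (Bf C))\<bar> \<le> 1" using Dle[OF C] sq_le1 unfolding D_def by blast
      have a: "Af C \<inter> Bf C = {}" "Af C \<union> Bf C = C"
         "{e\<in>E. e \<subseteq> C} = {{x,y} | x y. x \<in> Af C \<and> y \<in> Bf C}"
        using bspec[OF cb C] by auto
      show "balanced_complete_bipartite E C" unfolding balanced_complete_bipartite_def
        apply (rule exI[of _ "Af C"], rule exI[of _ "Bf C"])
        using a ab by simp
    qed
    define Od where "Od = {C \<in> components V E. odd (card C)}"
    have DO: "1 \<le> D C" if "C \<in> Od" for C
    proof -
      have C: "C \<in> components V E" "odd (card C)" using that unfolding Od_def by auto
      have fab: "finite (Af C)" "finite (Bf C)" using cb C finC by (metis finite_Un)+
      have "card C = card (Af C) + card (Bf C)" using cb C fab card_Un_disjoint by metis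
      then have "card (Af C) \<noteq> card (Bf C)" using C(2) by auto
      then show ?thesis unfolding D_def by (intro sq1) simp
    qed
    have fO: "finite Od" using fC unfolding Od_def by simp
    have "int (card Od) = (\<Sum>C\<in>Od. 1)" by simp
    also have "\<dots> \<le> (\<Sum>C\<in>Od. D C)" using DO by (intro sum_mono) auto
    also have "\<dots> \<le> (\<Sum>C\<in>components V E. D C)"
      using D0 fC by (intro sum_mono2) (auto simp: Od_def)
    finally have "card Od \<le> 1" using SD by linarith
    then show "(\<forall>C\<in>components V E. balanced_complete_bipartite E C) \<and>
           card {C \<in> components V E. odd (card C)} \<le> 1" using bal unfolding Od_def by simp
  next
    assume h: "(\<forall>C\<in>components V E. balanced_complete_bipartite E C) \<and>
           card {C \<in> components V E. odd (card C)} \<le> 1"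
    have "\<forall>C\<in>components V E. \<exists>p. P C (fst p) (snd p) \<and> \<bar>int (card (fst p)) - int (card (snd p))\<bar> \<le> 1"
    proof
      fix C assume "C \<in> components V E"
      then have "balanced_complete_bipartite E C" using h by blast
      then obtain A B where "P C A B" "\<bar>int (card A) - int (card B)\<bar> \<le> 1"
        unfolding balanced_complete_bipartite_def P_def by blast
      then show "\<exists>p. P C (fst p) (snd p) \<and> \<bar>int (card (fst p)) - int (card (snd p))\<bar> \<le> 1"
        by (intro exI[of _ "(A,B)"]) auto
    qed
    then obtain g where g: "\<forall>C\<in>components V E. P C (fst (g C)) (snd (g C)) \<and>
          \<bar>int (card (fst (g C))) - int (card (snd (g C)))\<bar> \<le> 1"
      using bchoice by metis
    define Af where "Af C = fst (g C)" for C
    define Bf where "Bf C = snd (g C)" for C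
    define D where "D C = (int (card (Af C)) - int (card (Bf C)))^2" for C
    have cb: "\<forall>C\<in>components V E. Af C \<inter> Bf C = {} \<and> Af C \<union> Bf C = C \<and>
              {e\<in>E. e \<subseteq> C} = {{x,y} | x y. x \<in> Af C \<and> y \<in> Bf C}"
      using g unfolding Af_def Bf_def by (simp add: P_def)
    have cnt: "2 * (int (card E) - int (card (square_edges V E))) =
         int (card V) - (\<Sum>C\<in>components V E. D C)"
      using count[OF sg cb] unfolding D_def by simp
    have Dv: "D C = (if odd (card C) then 1 else 0)" if C: "C \<in> components V E" for C
    proof -
      have fab: "finite (Af C)" "finite (Bf C)" using cb C finC by (metis finite_Un)+
      have "card C = card (Af C) + card (Bf C)" using cb C fab card_Un_disjoint by metis
      moreover have "\<bar>int (card (Af C)) - int (card (Bf C))\<bar> \<le> 1" using g C unfolding Af_def Bf_def by blast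
      ultimately show ?thesis unfolding D_def using D_bal by metis
    qed
    have "(\<Sum>C\<in>components V E. D C) = (\<Sum>C\<in>components V E. if odd (card C) then 1 else 0)"
      using Dv by (intro sum.cong) auto
    also have "\<dots> = (\<Sum>C\<in>{C \<in> components V E. odd (card C)}. 1)"
      by (rule sum.inter_filter[OF fC, of "\<lambda>_. (1::int)", symmetric])
    also have "\<dots> = int (card {C \<in> components V E. odd (card C)})" by simp
    finally have SD: "(\<Sum>C\<in>components V E. D C) = int (card {C \<in> components V E. odd (card C)})" .
    define k where "k = card {C \<in> components V E. odd (card C)}"
    have "k \<le> 1" using h unfolding k_def by simp
    moreover have "2 * (int (card E) - int (card (square_edges V E))) = int (card V) - int k"
      using cnt SD unfolding k_def by simp
    ultimately show "int (card E) - int (card (square_edges V E)) = int (card V div 2)"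
      by presburger
  qed
  then show ?thesis using ineq[OF sg] by blast
qed

end
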